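(* Let $G$ be a flag with vertices $v_1,\dots,v_n$ ordered by increasing $x$-coordinate, and let $v_iv_j$ ($i<j$) be a separating edge. Then no edge of $G[V^+(v_iv_j)]$ intersects an edge of $G[V^-(v_iv_j)]$. Furthermore, if $e$ is an edge of $G[V^+(v_iv_j)]$ and $f$ is an edge of $G[V^-(v_iv_j)]$, then $e$ and $f$ are related and $f\prec e$.
   Context: Let $\mathcal C=S^1\times\mathbb R$ ($S^1=[0,1]$ with $0\sim1$), points $p=(p_x,p_y)$ with $0\le p_x<1$. A flag is a graph drawn on $\mathcal C$ (vertices distinct points, edges Jordan arcs, no overlapping edges, no edge through a vertex) that is complete, simple (any two edges meet in at most one point: a common endpoint or a proper crossing), monotone (every edge meets each vertical line $l_{x=a}=\{p:p_x=a\}$ at most once, no two vertices share an $x$-coordinate, no vertex has $x$-coordinate $0$), and such that $l_{x=0}$ meets every edge in its relative interior. A point $v$ is related to an $x$-monotone curve $e$ if $l_{x=v_x}$ meets $e$ in its relative interior; then $v$ is below (above) $e$ if $v_y$ is smaller (larger) than the $y$-coordinate of $l_{x=v_x}\cap e$. Two $x$-monotone curves $e,f$ are related if they do not cross, some vertical line meets both relative interiors, and all such lines meet them in the same vertical order; then $e\prec f$ means that on every vertical line meeting both relative interiors, $e$'s point has $y$-coordinate at most that of $f$'s point. For $i<j$, $V^+(v_iv_j)=\{v_s: s>j,\ v_s \text{ above } v_iv_j\}$ and $V^-(v_iv_j)=\{v_s: s>j,\ v_s \text{ below } v_iv_j\}$. The edge $v_iv_j$ is separating if $|V^+(v_iv_j)|>1$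 and $|V^-(v_iv_j)|>1$. For a vertex set $U$, $G[U]$ is the induced subgraph. *)

theory Defs
  imports Complex_Main
begin

text \<open>Cylinder points are pairs (a,b) with 0 <= a < 1. Vertices are indexed
1..n, vertex k = (x k, y k). Since every edge is x-monotone and crosses the line x=0 in
its relative interior, the edge v_i v_j (i<j, so x i < x j) projects onto the arc of S^1
from x j through 0 to x i; it is the graph of a continuous function E i j on the unwrapped
interval [x j, x i + 1] (parameter t corresponds to cylinder x-coordinate frac t).\<close>

definition ey :: "(nat \<Rightarrow> real) \<Rightarrow> (nat \<Rightarrow> nat \<Rightarrow> real \<Rightarrow> real) \<Rightarrow> nat \<Rightarrow> nat \<Rightarrow> real \<Rightarrow> real" where
  "ey x E i j a = (if x j \<le> frac a then E i j (frac a) else E i j (frac a + 1))"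

definition edom :: "(nat \<Rightarrow> real) \<Rightarrow> nat \<Rightarrow> nat \<Rightarrow> real set" where
  "edom x i j = {a. x j \<le> frac a \<or> frac a \<le> x i}"

definition erel :: "(nat \<Rightarrow> real) \<Rightarrow> nat \<Rightarrow> nat \<Rightarrow> real set" where
  "erel x i j = {a. x j < frac a \<or> frac a < x i}"

definition epts :: "(nat \<Rightarrow> real) \<Rightarrow> (nat \<Rightarrow> nat \<Rightarrow> real \<Rightarrow> real) \<Rightarrow> nat \<Rightarrow> nat \<Rightarrow> (real \<times> real) set" where
  "epts x E i j = {(a, ey x E i j a) | a. 0 \<le> a \<and> a < 1 \<and> a \<in> edom x i j}"

definition proper_cross :: "(nat \<Rightarrow> real) \<Rightarrow> (nat \<Rightarrow> nat \<Rightarrow> real \<Rightarrow> real) \<Rightarrow> nat \<Rightarrow> nat \<Rightarrow> nat \<Rightarrow> nat \<Rightarrow> real \<Rightarrow> bool" where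
  "proper_cross x E i j k l a \<longleftrightarrow> 0 \<le> a \<and> a < 1 \<and> ey x E i j a = ey x E k l a \<and>
     (\<exists>\<delta>>0. {a - \<delta><..<a + \<delta>} \<subseteq> erel x i j \<inter> erel x k l \<and>
        (((\<forall>t\<in>{a - \<delta><..<a}. ey x E i j t < ey x E k l t) \<and> (\<forall>t\<in>{a<..<a + \<delta>}. ey x E k l t < ey x E i j t)) \<or>
         ((\<forall>t\<in>{a - \<delta><..<a}. ey x E k l t < ey x E i j t) \<and> (\<forall>t\<in>{a<..<a + \<delta>}. ey x E i j t < ey x E k l t))))"

definition flag :: "nat \<Rightarrow> (nat \<Rightarrow> real) \<Rightarrow> (nat \<Rightarrow> real) \<Rightarrow> (nat \<Rightarrow> nat \<Rightarrow> real \<Rightarrow> real) \<Rightarrow> bool" where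
  "flag n x y E \<longleftrightarrow>
     (\<forall>i\<in>{1..n}. 0 < x i \<and> x i < 1) \<and>
     (\<forall>i j. 1 \<le> i \<and> i < j \<and> j \<le> n \<longrightarrow> x i < x j) \<and>
     (\<forall>i j. 1 \<le> i \<and> i < j \<and> j \<le> n \<longrightarrow>
        continuous_on {x j .. x i + 1} (E i j) \<and> E i j (x j) = y j \<and> E i j (x i + 1) = y i) \<and>
     (\<forall>i j k. 1 \<le> i \<and> i < j \<and> j \<le> n \<and> k \<in> {1..n} \<and> k \<noteq> i \<and> k \<noteq> j \<longrightarrow>
        (x k, y k) \<notin> epts x E i j) \<and>
     (\<forall>i j k l. 1 \<le> i \<and> i < j \<and> j \<le> n \<and> 1 \<le> k \<and> k < l \<and> l \<le> n \<and> (i, j) \<noteq> (k, l) \<longrightarrow>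
        (\<forall>p\<in>epts x E i j \<inter> epts x E k l. \<forall>q\<in>epts x E i j \<inter> epts x E k l. p = q) \<and>
        (\<forall>p\<in>epts x E i j \<inter> epts x E k l.
           p \<in> {(x i, y i), (x j, y j)} \<inter> {(x k, y k), (x l, y l)} \<or> proper_cross x E i j k l (fst p)))"

definition Vplus :: "nat \<Rightarrow> (nat \<Rightarrow> real) \<Rightarrow> (nat \<Rightarrow> real) \<Rightarrow> (nat \<Rightarrow> nat \<Rightarrow> real \<Rightarrow> real) \<Rightarrow> nat \<Rightarrow> nat \<Rightarrow> nat set" where
  "Vplus n x y E i j = {s. j < s \<and> s \<le> n \<and> ey x E i j (x s) < y s}"

definition Vminus :: "nat \<Rightarrow> (nat \<Rightarrow> real) \<Rightarrow> (nat \<Rightarrow> real) \<Rightarrow> (nat \<Rightarrow> nat \<Rightarrow> real \<Rightarrow> real) \<Rightarrow> nat \<Rightarrow> nat \<Rightarrow> nat set" where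
  "Vminus n x y E i j = {s. j < s \<and> s \<le> n \<and> y s < ey x E i j (x s)}"

definition separating :: "nat \<Rightarrow> (nat \<Rightarrow> real) \<Rightarrow> (nat \<Rightarrow> real) \<Rightarrow> (nat \<Rightarrow> nat \<Rightarrow> real \<Rightarrow> real) \<Rightarrow> nat \<Rightarrow> nat \<Rightarrow> bool" where
  "separating n x y E i j \<longleftrightarrow> card (Vplus n x y E i j) > 1 \<and> card (Vminus n x y E i j) > 1"

definition related :: "(nat \<Rightarrow> real) \<Rightarrow> (nat \<Rightarrow> nat \<Rightarrow> real \<Rightarrow> real) \<Rightarrow> nat \<Rightarrow> nat \<Rightarrow> nat \<Rightarrow> nat \<Rightarrow> bool" where
  "related x E k l i j \<longleftrightarrow>
     \<not> (\<exists>a. proper_cross x E k l i j a) \<and>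
     (\<exists>a. 0 \<le> a \<and> a < 1 \<and> a \<in> erel x k l \<inter> erel x i j) \<and>
     ((\<forall>a. 0 \<le> a \<and> a < 1 \<and> a \<in> erel x k l \<inter> erel x i j \<longrightarrow> ey x E k l a \<le> ey x E i j a) \<or>
      (\<forall>a. 0 \<le> a \<and> a < 1 \<and> a \<in> erel x k l \<inter> erel x i j \<longrightarrow> ey x E i j a \<le> ey x E k l a))"

definition prec :: "(nat \<Rightarrow> real) \<Rightarrow> (nat \<Rightarrow> nat \<Rightarrow> real \<Rightarrow> real) \<Rightarrow> nat \<Rightarrow> nat \<Rightarrow> nat \<Rightarrow> nat \<Rightarrow> bool" where
  "prec x E k l i j \<longleftrightarrow>
     (\<forall>a. 0 \<le> a \<and> a < 1 \<and> a \<in> erel x k l \<inter> erel x i j \<longrightarrow> ey x E k l a \<le> ey x E i j a)"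

end

theory Submission imports Defs begin

lemma frac_small: "0 \<le> t \<Longrightarrow> t < 1 \<Longrightarrow> frac (t::real) = t"
  by (simp add: frac_eq)

lemma frac_big: "1 \<le> t \<Longrightarrow> t < 2 \<Longrightarrow> frac (t::real) = t - 1"
proof -
  assume "1 \<le> t" "t < 2"
  then have "floor t = 1" by (simp add: floor_eq_iff)
  then show ?thesis by (simp add: frac_def)
qed

lemma ivt_up:
  fixes g :: "real \<Rightarrow> real"
  assumes "continuous_on {a..b} g" "a \<le> b" "g a \<le> 0" "0 \<le> g b"
  shows "\<exists>t. a \<le> t \<and> t \<le> b \<and> g t = 0"
  using IVT'[of g a 0 b] assms by auto

lemma ivt_down:
  fixes g :: "real \<Rightarrow> real"
  assumes "continuous_on {a..b} g" "a \<le> b" "0 \<le> g a" "g b \<le> 0"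
  shows "\<exists>t. a \<le> t \<and> t \<le> b \<and> g t = 0"
  using IVT2'[of g b 0 a] assms by auto

definition PP :: "nat \<Rightarrow> (nat \<Rightarrow> real) \<Rightarrow> (nat \<Rightarrow> real) \<Rightarrow> (nat \<Rightarrow> nat \<Rightarrow> real \<Rightarrow> real) \<Rightarrow> bool" where
  "PP n x y F \<longleftrightarrow>
     (\<forall>i\<in>{1..n}. 0 < x i \<and> x i < 1) \<and>
     (\<forall>i j. 1 \<le> i \<and> i < j \<and> j \<le> n \<longrightarrow> x i < x j) \<and>
     (\<forall>i j. 1 \<le> i \<and> i < j \<and> j \<le> n \<longrightarrow>
        continuous_on {x j .. x i + 1} (F i j) \<and> F i j (x j) = y j \<and> F i j (x i + 1) = y i) \<and>
     (\<forall>a b v t. 1 \<le> a \<and> a < b \<and> b \<le> n \<and> 1 \<le> v \<and> v \<le> n \<and> v \<noteq> a \<and> v \<noteq> b \<and>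
        x b \<le> t \<and> t \<le> x a + 1 \<and> frac t = x v \<longrightarrow> F a b t \<noteq> y v) \<and>
     (\<forall>a b c d t s t' s'. 1 \<le> a \<and> a < b \<and> b \<le> n \<and> 1 \<le> c \<and> c < d \<and> d \<le> n \<and> (a, b) \<noteq> (c, d) \<and>
        x b \<le> t \<and> t \<le> x a + 1 \<and> x d \<le> s \<and> s \<le> x c + 1 \<and> frac t = frac s \<and> F a b t = F c d s \<and>
        x b \<le> t' \<and> t' \<le> x a + 1 \<and> x d \<le> s' \<and> s' \<le> x c + 1 \<and> frac t' = frac s' \<and> F a b t' = F c d s'
        \<longrightarrow> frac t = frac t')"

lemma PP_neg: assumes "PP n x y F" shows "PP n x (\<lambda>s. - y s) (\<lambda>a b t. - F a b t)"
proof -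
  have c: "continuous_on {x j .. x i + 1} (\<lambda>t. - F i j t)" if "continuous_on {x j .. x i + 1} (F i j)" for i j
    using continuous_on_minus[OF that] .
  show ?thesis using assms unfolding PP_def neg_equal_iff_equal
    apply (elim conjE)
    apply (intro conjI)
        apply assumption
       apply assumption
    using c apply blast
     apply assumption
    apply assumption
    done
qed

lemma lift:
  assumes xs: "0 < x a" "x a < x b" "x b < 1" and t: "x b \<le> t" "t \<le> x a + 1"
  shows "ey x E a b (frac t) = E a b t \<and> 0 \<le> frac t \<and> frac t < 1 \<and> frac t \<in> edom x a b"
proof (cases "t < 1")
  case True
  then have "frac t = t" using frac_small[of t] xs t by auto
  then show ?thesis using True xs t by (auto simp: ey_def edom_def)
next
  case False
  then have "frac t = t - 1" using frac_big[of t] xs t by auto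
  then show ?thesis using False xs t by (auto simp: ey_def edom_def)
qed

lemma flag_PP: assumes "flag n x y E" shows "PP n x y E"
proof -
  have xp: "\<forall>i\<in>{1..n}. 0 < x i \<and> x i < 1" and xm: "\<forall>i j. 1 \<le> i \<and> i < j \<and> j \<le> n \<longrightarrow> x i < x j"
    and ce: "\<forall>i j. 1 \<le> i \<and> i < j \<and> j \<le> n \<longrightarrow>
        continuous_on {x j .. x i + 1} (E i j) \<and> E i j (x j) = y j \<and> E i j (x i + 1) = y i"
    and nv: "\<forall>i j k. 1 \<le> i \<and> i < j \<and> j \<le> n \<and> k \<in> {1..n} \<and> k \<noteq> i \<and> k \<noteq> j \<longrightarrow>
        (x k, y k) \<notin> epts x E i j"
    and cr: "\<forall>i j k l. 1 \<le> i \<and> i < j \<and> j \<le> n \<and> 1 \<le> k \<and> k < l \<and> l \<le> n \<and> (i, j) \<noteq> (k, l) \<longrightarrow>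
        (\<forall>p\<in>epts x E i j \<inter> epts x E k l. \<forall>q\<in>epts x E i j \<inter> epts x E k l. p = q)"
    using assms unfolding flag_def apply -
    apply (erule conjE, assumption)
    apply (erule conjE)+ apply assumption
    apply (erule conjE)+ apply assumption
    apply (erule conjE)+ apply assumption
    apply (erule conjE)+ apply blast
    done
  have inE: "(frac t, E a b t) \<in> epts x E a b" if "1 \<le> a" "a < b" "b \<le> n" "x b \<le> t" "t \<le> x a + 1" for a b t
  proof -
    have "0 < x a" "x a < x b" "x b < 1" using xp xm that by auto
    from lift[OF this that(4,5), of E] show ?thesis unfolding epts_def by force
  qed
  have A: "\<forall>a b v t. 1 \<le> a \<and> a < b \<and> b \<le> n \<and> 1 \<le> v \<and> v \<le> n \<and> v \<noteq> a \<and> v \<noteq> b \<and>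
        x b \<le> t \<and> t \<le> x a + 1 \<and> frac t = x v \<longrightarrow> E a b t \<noteq> y v"
  proof (intro allI impI)
    fix a b v t assume h: "1 \<le> a \<and> a < b \<and> b \<le> n \<and> 1 \<le> v \<and> v \<le> n \<and> v \<noteq> a \<and> v \<noteq> b \<and>
        x b \<le> t \<and> t \<le> x a + 1 \<and> frac t = x v"
    show "E a b t \<noteq> y v"
    proof
      assume "E a b t = y v"
      then have "(x v, y v) \<in> epts x E a b" using inE[of a b t] h by auto
      then show False using nv h by auto
    qed
  qed
  have B: "\<forall>a b c d t s t' s'. 1 \<le> a \<and> a < b \<and> b \<le> n \<and> 1 \<le> c \<and> c < d \<and> d \<le> n \<and> (a, b) \<noteq> (c, d) \<and>
        x b \<le> t \<and> t \<le> x a + 1 \<and> x d \<le> s \<and> s \<le> x c + 1 \<and> frac t = frac s \<and> E a b t = E c d s \<and>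
        x b \<le> t' \<and> t' \<le> x a + 1 \<and> x d \<le> s' \<and> s' \<le> x c + 1 \<and> frac t' = frac s' \<and> E a b t' = E c d s'
        \<longrightarrow> frac t = frac t'"
  proof (intro allI impI)
    fix a b c d t s t' s' assume h: "1 \<le> a \<and> a < b \<and> b \<le> n \<and> 1 \<le> c \<and> c < d \<and> d \<le> n \<and> (a, b) \<noteq> (c, d) \<and>
        x b \<le> t \<and> t \<le> x a + 1 \<and> x d \<le> s \<and> s \<le> x c + 1 \<and> frac t = frac s \<and> E a b t = E c d s \<and>
        x b \<le> t' \<and> t' \<le> x a + 1 \<and> x d \<le> s' \<and> s' \<le> x c + 1 \<and> frac t' = frac s' \<and> E a b t' = E c d s'"
    have p1: "(frac t, E a b t) \<in> epts x E a b \<inter> epts x E c d"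
      using inE[of a b t] inE[of c d s] h by auto
    have p2: "(frac t', E a b t') \<in> epts x E a b \<inter> epts x E c d"
      using inE[of a b t'] inE[of c d s'] h by auto
    have "(frac t, E a b t) = (frac t', E a b t')" using cr h p1 p2 by blast
    then show "frac t = frac t'" by simp
  qed
  show ?thesis unfolding PP_def using xp xm ce A B by blast
qed


lemma frac_cases: "0 \<le> t \<Longrightarrow> t < 2 \<Longrightarrow> (t < 1 \<and> frac (t::real) = t) \<or> (1 \<le> t \<and> frac t = t - 1)"
  using frac_small[of t] frac_big[of t] by (cases "t < 1") auto

lemma frac_shift: "0 \<le> s \<Longrightarrow> s < 1 \<Longrightarrow> frac ((s::real) + 1) = s"
  using frac_big[of "s+1"] by auto

locale PL =
  fixes n :: nat and x y :: "nat \<Rightarrow> real" and F :: "nat \<Rightarrow> nat \<Rightarrow> real \<Rightarrow> real" and i j :: nat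
  assumes PP: "PP n x y F" and ij: "1 \<le> i" "i < j" "j \<le> n"
begin

lemma xb: "1 \<le> s \<Longrightarrow> s \<le> n \<Longrightarrow> 0 < x s \<and> x s < 1"
  using PP unfolding PP_def by auto

lemma xlt: "1 \<le> a \<Longrightarrow> a < b \<Longrightarrow> b \<le> n \<Longrightarrow> x a < x b"
  using PP unfolding PP_def by blast

lemma xle_iff: "1 \<le> a \<Longrightarrow> a \<le> n \<Longrightarrow> 1 \<le> b \<Longrightarrow> b \<le> n \<Longrightarrow> x a < x b \<longleftrightarrow> a < b"
  using xlt[of a b] xlt[of b a] by (cases a b rule: linorder_cases) auto

lemma cont: "1 \<le> a \<Longrightarrow> a < b \<Longrightarrow> b \<le> n \<Longrightarrow> continuous_on {x b .. x a + 1} (F a b)"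
  using PP unfolding PP_def by blast

lemma Fb: "1 \<le> a \<Longrightarrow> a < b \<Longrightarrow> b \<le> n \<Longrightarrow> F a b (x b) = y b"
  using PP unfolding PP_def by blast

lemma Fa: "1 \<le> a \<Longrightarrow> a < b \<Longrightarrow> b \<le> n \<Longrightarrow> F a b (x a + 1) = y a"
  using PP unfolding PP_def by blast

lemma nov: "1 \<le> a \<Longrightarrow> a < b \<Longrightarrow> b \<le> n \<Longrightarrow> 1 \<le> v \<Longrightarrow> v \<le> n \<Longrightarrow> v \<noteq> a \<Longrightarrow> v \<noteq> b \<Longrightarrow>
   x b \<le> t \<Longrightarrow> t \<le> x a + 1 \<Longrightarrow> frac t = x v \<Longrightarrow> F a b t \<noteq> y v"
  using PP unfolding PP_def by blast

lemma uniq: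
  assumes "1 \<le> a" "a < b" "b \<le> n" "1 \<le> c" "c < d" "d \<le> n" "(a, b) \<noteq> (c, d)"
   "x b \<le> t" "t \<le> x a + 1" "x d \<le> s" "s \<le> x c + 1" "frac t = frac s" "F a b t = F c d s"
   "x b \<le> t'" "t' \<le> x a + 1" "x d \<le> s'" "s' \<le> x c + 1" "frac t' = frac s'" "F a b t' = F c d s'"
  shows "frac t = frac t'"
proof -
  have H: "\<forall>a b c d t s t' s'. 1 \<le> a \<and> a < b \<and> b \<le> n \<and> 1 \<le> c \<and> c < d \<and> d \<le> n \<and> (a, b) \<noteq> (c, d) \<and>
        x b \<le> t \<and> t \<le> x a + 1 \<and> x d \<le> s \<and> s \<le> x c + 1 \<and> frac t = frac s \<and> F a b t = F c d s \<and>
        x b \<le> t' \<and> t' \<le> x a + 1 \<and> x d \<le> s' \<and> s' \<le> x c + 1 \<and> frac t' = frac s' \<and> F a b t' = F c d s'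
        \<longrightarrow> frac t = frac t'"
    using PP unfolding PP_def by (elim conjE) assumption
  show ?thesis using H[rule_format, of a b c d t s t' s'] assms by blast
qed

lemma cont_sub: "1 \<le> a \<Longrightarrow> a < b \<Longrightarrow> b \<le> n \<Longrightarrow> x b \<le> p \<Longrightarrow> q \<le> x a + 1 \<Longrightarrow> continuous_on {p..q} (F a b)"
  by (rule continuous_on_subset[OF cont]) auto

lemma cont_sh: "1 \<le> a \<Longrightarrow> a < b \<Longrightarrow> b \<le> n \<Longrightarrow> x b \<le> p + 1 \<Longrightarrow> q + 1 \<le> x a + 1 \<Longrightarrow>
   continuous_on {p..q} (\<lambda>s. F a b (s + 1))"
proof -
  assume h: "1 \<le> a" "a < b" "b \<le> n" "x b \<le> p + 1" "q + 1 \<le> x a + 1"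
  have c: "continuous_on {p+1..q+1} (F a b)" using cont_sub[OF h(1-3), of "p+1" "q+1"] h by auto
  have "continuous_on {p..q} (\<lambda>s. s + (1::real))" by (intro continuous_intros)
  moreover have "(\<lambda>s. s + (1::real)) ` {p..q} \<subseteq> {p+1..q+1}" by auto
  ultimately show ?thesis using continuous_on_compose2[OF c] by blast
qed

lemma B:
  assumes s: "j < s" "s \<le> n" "F i j (x s) < y s" and t: "x s \<le> t" "t \<le> x i + 1"
  shows "F i j t < F j s t"
proof (rule ccontr)
  assume neg: "\<not> F i j t < F j s t"
  have X: "0 < x i" "x i < x j" "x j < x s" "x s < 1"
    using xb[of i] xb[of s] xlt[of i j] xlt[of j s] ij s by auto
  have c: "continuous_on {x s..t} (\<lambda>u. F j s u - F i j u)"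
    using ij s t X by (intro continuous_on_diff cont_sub) auto
  obtain u where u: "x s \<le> u" "u \<le> t" "F j s u - F i j u = 0"
    using ivt_down[OF c] t neg s Fb[of j s] ij by force
  have "frac u = frac (x j + 1)"
    apply (rule uniq[of j s i j u u "x j + 1" "x j"])
    using ij s t X u Fb[of i j] Fa[of j s] by (auto simp: frac_shift)
  then have "frac u = x j" using X frac_shift[of "x j"] by simp
  moreover have "frac u \<noteq> x j" using frac_cases[of u] X u t by auto
  ultimately show False by simp
qed


lemma A:
  assumes kl: "j < k" "k < l" "l \<le> n" "F i j (x k) < y k" "F i j (x l) < y l" and t: "x l \<le> t" "t \<le> x i + 1"
  shows "F i j t < F k l t"
proof (rule ccontr)
  assume neg: "\<not> F i j t < F k l t"
  have X: "0 < x i" "x i < x j" "x j < x k" "x k < x l" "x l < 1"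
    using xb[of i] xb[of l] xlt[of i j] xlt[of j k] xlt[of k l] ij kl by auto
  have c1: "continuous_on {x l..t} (\<lambda>u. F k l u - F i j u)"
    using ij kl t X by (intro continuous_on_diff cont_sub) auto
  obtain t1 where t1: "x l \<le> t1" "t1 \<le> t" "F k l t1 - F i j t1 = 0"
    using ivt_down[OF c1] t neg Fb[of k l] kl by force
  have fr1: "frac t1 \<ge> x l \<or> frac t1 \<le> x i" using frac_cases[of t1] X t1 t by auto
  have hj: "y j < F k l (x j + 1)"
  proof (rule ccontr)
    assume n2: "\<not> y j < F k l (x j + 1)"
    have c3: "continuous_on {x j..x k} (\<lambda>s. F k l (s+1) - F i j s)"
      using ij kl X by (intro continuous_on_diff cont_sub cont_sh) auto
    obtain s1 where s1: "x j \<le> s1" "s1 \<le> x k" "F k l (s1+1) - F i j s1 = 0"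
      using ivt_up[OF c3] n2 Fb[of i j] Fa[of k l] kl X ij by force
    have "frac t1 = frac (s1 + 1)"
      by (rule uniq[of k l i j t1 t1 "s1+1" s1]) (use ij kl t X t1 s1 frac_shift[of s1] frac_small[of s1] in auto)
    then have "frac t1 = s1" using frac_shift[of s1] X s1 by auto
    then show False using fr1 s1 X by auto
  qed
  have c4: "continuous_on {t1..x j+1} (\<lambda>u. F k l u - F j l u)"
    using ij kl X t1 by (intro continuous_on_diff cont_sub) auto
  have b: "F i j t1 < F j l t1" using B[of l t1] kl t1 t ij by auto
  obtain u where u: "t1 \<le> u" "u \<le> x j + 1" "F k l u - F j l u = 0"
    using ivt_up[OF c4] b t1 hj Fa[of j l] ij kl X t by force
  have "frac u = frac (x l)"
    by (rule uniq[of k l j l u u "x l" "x l"]) (use ij kl t X t1 u Fb[of k l] Fb[of j l] in auto)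
  then have fu: "frac u = x l" using frac_small[of "x l"] X by auto
  show False
  proof (cases "u < 1")
    case True
    then have "u = x l" using fu frac_small[of u] X u t1 by auto
    then have "t1 = x l" using t1 u by auto
    then show False using t1 Fb[of k l] kl by auto
  next
    case False
    then show False using fu frac_big[of u] X u by auto
  qed
qed

lemma PL_neg: "PL n x (\<lambda>s. - y s) (\<lambda>a b t. - F a b t) i j"
  using PP_neg[OF PP] ij by unfold_locales auto

lemma Aneg:
  assumes kl: "j < k" "k < l" "l \<le> n" "y k < F i j (x k)" "y l < F i j (x l)" and t: "x l \<le> t" "t \<le> x i + 1"
  shows "F k l t < F i j t"
proof -
  interpret M: PL n x "\<lambda>s. - y s" "\<lambda>a b t. - F a b t" i j by (rule PL_neg)
  show ?thesis using M.A[of k l t] assms by auto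
qed


lemma D:
  assumes k: "j < k" "F i j (x k) < y k" and kk: "k < k'" "k' < l'" "l' \<le> n" "y k' < F i j (x k')" "y l' < F i j (x l')"
  shows "F k' l' (x k + 1) < y k"
proof (rule ccontr)
  assume neg: "\<not> F k' l' (x k + 1) < y k"
  have X: "0 < x i" "x i < x j" "x j < x k" "x k < x k'" "x k' < x l'" "x l' < 1"
    using xb[of i] xb[of l'] xlt[of i j] xlt[of j k] xlt[of k k'] xlt[of k' l'] ij k kk by auto
  have "F k' l' (x k + 1) \<noteq> y k"
    by (rule nov[of k' l' k "x k + 1"]) (use ij k kk X frac_shift[of "x k"] in auto)
  then have gt: "y k < F k' l' (x k + 1)" using neg by auto
  have c3: "continuous_on {x k..x k'} (\<lambda>s. F k' l' (s+1) - F i j s)"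
    using ij k kk X by (intro continuous_on_diff cont_sub cont_sh) auto
  obtain s1 where s1: "x k \<le> s1" "s1 \<le> x k'" "F k' l' (s1+1) - F i j s1 = 0"
    using ivt_down[OF c3] gt k Fa[of k' l'] kk X ij by force
  have hj: "y j < F k' l' (x j + 1)"
  proof (rule ccontr)
    assume n2: "\<not> y j < F k' l' (x j + 1)"
    have c3': "continuous_on {x j..x k} (\<lambda>s. F k' l' (s+1) - F i j s)"
      using ij k kk X by (intro continuous_on_diff cont_sub cont_sh) auto
    obtain s2 where s2: "x j \<le> s2" "s2 \<le> x k" "F k' l' (s2+1) - F i j s2 = 0"
      using ivt_up[OF c3'] n2 gt k Fb[of i j] kk X ij by force
    have "frac (s1+1) = frac (s2 + 1)"
      by (rule uniq[of k' l' i j "s1+1" s1 "s2+1" s2]) (use ij k kk X s1 s2 frac_shift[of s1] frac_shift[of s2] frac_small[of s1] frac_small[of s2] in auto)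
    then have "s1 = s2" using frac_shift[of s1] frac_shift[of s2] X s1 s2 by auto
    then show False using s1 s2 gt k by auto
  qed
  have c5: "continuous_on {x l'..x j+1} (\<lambda>u. F j k u - F k' l' u)"
    using ij k kk X by (intro continuous_on_diff cont_sub) auto
  have b1: "F i j (x l') < F j k (x l')" using B[of k "x l'"] ij k kk X by auto
  obtain t2 where t2: "x l' \<le> t2" "t2 \<le> x j + 1" "F j k t2 - F k' l' t2 = 0"
    using ivt_down[OF c5] b1 hj Fb[of k' l'] Fa[of j k] ij k kk X by force
  have c6: "continuous_on {x k..x k'} (\<lambda>s. F j k s - F k' l' (s+1))"
    using ij k kk X by (intro continuous_on_diff cont_sub cont_sh) auto
  have b2: "F i j (x k') < F j k (x k')" using B[of k "x k'"] ij k kk X by auto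
  obtain s3 where s3: "x k \<le> s3" "s3 \<le> x k'" "F j k s3 - F k' l' (s3+1) = 0"
    using ivt_up[OF c6] b2 gt Fb[of j k] Fa[of k' l'] ij k kk X by force
  have "frac t2 = frac s3"
    by (rule uniq[of j k k' l' t2 t2 s3 "s3+1"]) (use ij k kk X t2 s3 frac_shift[of s3] frac_small[of s3] in auto)
  then have "frac t2 = s3" using frac_small[of s3] X s3 by auto
  then show False using frac_cases[of t2] X t2 s3 by auto
qed

lemma Dneg:
  assumes k: "j < k'" "y k' < F i j (x k')" and kk: "k' < k" "k < l" "l \<le> n" "F i j (x k) < y k" "F i j (x l) < y l"
  shows "y k' < F k l (x k' + 1)"
proof -
  interpret M: PL n x "\<lambda>s. - y s" "\<lambda>a b t. - F a b t" i j by (rule PL_neg)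
  show ?thesis using M.D[of k' k l] assms by auto
qed

lemma E:
  assumes o: "j < k" "k < l" "l < k'" "k' < l'" "l' \<le> n"
    and ab: "F i j (x k) < y k" "F i j (x l) < y l" "y k' < F i j (x k')" "y l' < F i j (x l')"
    and s: "x l \<le> s" "s \<le> x k'"
  shows "F k' l' (s + 1) < F k l s"
proof (rule ccontr)
  assume neg: "\<not> F k' l' (s + 1) < F k l s"
  have X: "0 < x i" "x i < x j" "x j < x k" "x k < x l" "x l < x k'" "x k' < x l'" "x l' < 1"
    using xb[of i] xb[of l'] xlt[of i j] xlt[of j k] xlt[of k l] xlt[of l k'] xlt[of k' l'] ij o by auto
  have a0: "F i j s < F k l s" using A[of k l s] o ab s X by auto
  have c3: "continuous_on {s..x k'} (\<lambda>s. F k' l' (s+1) - F i j s)"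
    using ij o X s by (intro continuous_on_diff cont_sub cont_sh) auto
  obtain s1 where s1: "s \<le> s1" "s1 \<le> x k'" "F k' l' (s1+1) - F i j s1 = 0"
    using ivt_down[OF c3] a0 neg ab Fa[of k' l'] o X s by force
  have hj: "y j < F k' l' (x j + 1)"
  proof (rule ccontr)
    assume n2: "\<not> y j < F k' l' (x j + 1)"
    have c3': "continuous_on {x j..s} (\<lambda>s. F k' l' (s+1) - F i j s)"
      using ij o X s by (intro continuous_on_diff cont_sub cont_sh) auto
    obtain s2 where s2: "x j \<le> s2" "s2 \<le> s" "F k' l' (s2+1) - F i j s2 = 0"
      using ivt_up[OF c3'] n2 a0 neg Fb[of i j] o X ij s by force
    have "frac (s1+1) = frac (s2 + 1)"
      by (rule uniq[of k' l' i j "s1+1" s1 "s2+1" s2]) (use ij o s X s1 s2 frac_shift[of s1] frac_shift[of s2] frac_small[of s1] frac_small[of s2] in auto)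
    then have "s1 = s2" using frac_shift[of s1] frac_shift[of s2] X s1 s2 s by auto
    then show False using s1 s2 a0 neg by auto
  qed
  have A1: "F i j (x l') < F k l (x l')" using A[of k l "x l'"] o ab X by auto
  have A2: "F i j (x k') < F k l (x k')" using A[of k l "x k'"] o ab X by auto
  show False
  proof (cases "F k l (x j + 1) < y j")
    case True
    have c5: "continuous_on {x l'..x j+1} (\<lambda>u. F k l u - F k' l' u)"
      using ij o X by (intro continuous_on_diff cont_sub) auto
    obtain t2 where t2: "x l' \<le> t2" "t2 \<le> x j + 1" "F k l t2 - F k' l' t2 = 0"
      using ivt_down[OF c5] A1 ab True hj Fb[of k' l'] o X by force
    have c6: "continuous_on {s..x k'} (\<lambda>s. F k l s - F k' l' (s+1))"
      using ij o X s by (intro continuous_on_diff cont_sub cont_sh) auto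
    obtain s3 where s3: "s \<le> s3" "s3 \<le> x k'" "F k l s3 - F k' l' (s3+1) = 0"
      using ivt_up[OF c6] neg A2 ab Fa[of k' l'] o X s by force
    have "frac t2 = frac s3"
      by (rule uniq[of k l k' l' t2 t2 s3 "s3+1"]) (use ij o s X t2 s3 frac_shift[of s3] frac_small[of s3] in auto)
    then have "frac t2 = s3" using frac_small[of s3] X s3 s by auto
    then show False using frac_cases[of t2] X t2 s3 s by auto
  next
    case False
    have le: "F j l s \<le> F k' l' (s + 1)"
    proof (cases "s = x l")
      case True
      then show ?thesis using neg Fb[of j l] Fb[of k l] o ij by auto
    next
      case False
      have "F j l s < F k l s"
      proof (rule ccontr)
        assume n5: "\<not> F j l s < F k l s"
        have c: "continuous_on {s..x j + 1} (\<lambda>u. F k l u - F j l u)"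
          using ij o X s by (intro continuous_on_diff cont_sub) auto
        obtain u where u: "s \<le> u" "u \<le> x j + 1" "F k l u - F j l u = 0"
          using ivt_up[OF c] n5 \<open>\<not> F k l (x j + 1) < y j\<close> Fa[of j l] o ij X s by force
        have "frac u = frac (x l)"
          by (rule uniq[of k l j l u u "x l" "x l"]) (use ij o X s u Fb[of k l] Fb[of j l] in auto)
        then have fu: "frac u = x l" using frac_small[of "x l"] X by auto
        show False using frac_cases[of u] fu X u s False by auto
      qed
      then show ?thesis using neg by auto
    qed
    have c2: "continuous_on {s..x k'} (\<lambda>s. F j l s - F k' l' (s+1))"
      using ij o X s by (intro continuous_on_diff cont_sub cont_sh) auto
    have b2: "F i j (x k') < F j l (x k')" using B[of l "x k'"] ij o ab X by auto
    obtain s3 where s3: "s \<le> s3" "s3 \<le> x k'" "F j l s3 - F k' l' (s3+1) = 0"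
      using ivt_up[OF c2] le b2 ab Fa[of k' l'] o X s by force
    have c6: "continuous_on {x l'..x j+1} (\<lambda>u. F j l u - F k' l' u)"
      using ij o X by (intro continuous_on_diff cont_sub) auto
    have b1: "F i j (x l') < F j l (x l')" using B[of l "x l'"] ij o ab X by auto
    obtain t2 where t2: "x l' \<le> t2" "t2 \<le> x j + 1" "F j l t2 - F k' l' t2 = 0"
      using ivt_down[OF c6] b1 ab hj Fb[of k' l'] Fa[of j l] o ij X by force
    have "frac t2 = frac s3"
      by (rule uniq[of j l k' l' t2 t2 s3 "s3+1"]) (use ij o s X t2 s3 frac_shift[of s3] frac_small[of s3] in auto)
    then have "frac t2 = s3" using frac_small[of s3] X s3 s by auto
    then show False using frac_cases[of t2] X t2 s3 s by auto
  qed
qed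

lemma Eneg:
  assumes o: "j < k" "k < l" "l < k'" "k' < l'" "l' \<le> n"
    and ab: "y k < F i j (x k)" "y l < F i j (x l)" "F i j (x k') < y k'" "F i j (x l') < y l'"
    and s: "x l \<le> s" "s \<le> x k'"
  shows "F k l s < F k' l' (s + 1)"
proof -
  interpret M: PL n x "\<lambda>s. - y s" "\<lambda>a b t. - F a b t" i j by (rule PL_neg)
  show ?thesis using M.E[of k l k' l' s] assms by auto
qed

end

lemma eylo: "0 \<le> t \<Longrightarrow> t < x b \<Longrightarrow> x b \<le> 1 \<Longrightarrow> ey x E a b t = E a b (t + 1)"
  using frac_small[of t] by (simp add: ey_def)

lemma eyhi: "x b \<le> t \<Longrightarrow> t < 1 \<Longrightarrow> 0 \<le> t \<Longrightarrow> ey x E a b t = E a b t"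
  using frac_small[of t] by (simp add: ey_def)

lemma flag_cross:
  assumes "flag n x y E" "1 \<le> a" "a < b" "b \<le> n" "1 \<le> c" "c < d" "d \<le> n" "(a, b) \<noteq> (c, d)"
    "p \<in> epts x E a b" "p \<in> epts x E c d"
  shows "p \<in> {(x a, y a), (x b, y b)} \<inter> {(x c, y c), (x d, y d)} \<or> proper_cross x E a b c d (fst p)"
proof -
  have H: "\<forall>i j k l. 1 \<le> i \<and> i < j \<and> j \<le> n \<and> 1 \<le> k \<and> k < l \<and> l \<le> n \<and> (i, j) \<noteq> (k, l) \<longrightarrow>
        (\<forall>p\<in>epts x E i j \<inter> epts x E k l. \<forall>q\<in>epts x E i j \<inter> epts x E k l. p = q) \<and>
        (\<forall>p\<in>epts x E i j \<inter> epts x E k l.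
           p \<in> {(x i, y i), (x j, y j)} \<inter> {(x k, y k), (x l, y l)} \<or> proper_cross x E i j k l (fst p))"
    using assms(1) unfolding flag_def by (elim conjE) assumption
  show ?thesis using H[rule_format, of a b c d] assms by blast
qed

lemma main_arc:
  assumes fl: "flag n x y E" and ij: "1 \<le> i" "i < j" "j \<le> n"
   and o: "j < k" "k < l" "l \<le> n" "j < k'" "k' < l'" "l' \<le> n" "k \<noteq> k'"
   and ab: "E i j (x k) < y k" "E i j (x l) < y l" "y k' < E i j (x k')" "y l' < E i j (x l')"
   and t: "max (x l) (x l') \<le> t" "t \<le> min (x k) (x k') + 1"
  shows "E k' l' t < E k l t"
proof -
  interpret PL n x y E i j using flag_PP[OF fl] ij by unfold_locales
  have X: "0 < x i" "x i < x j" "x j < x k" "x k < x l" "x j < x k'" "x k' < x l'" "x l < 1" "x l' < 1"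
    using xb[of i] xb[of l] xb[of l'] xlt[of i j] xlt[of j k] xlt[of k l] xlt[of j k'] xlt[of k' l'] ij o by auto
  show ?thesis
  proof (cases "t \<le> x i + 1")
    case True
    then show ?thesis using A[of k l t] Aneg[of k' l' t] o ab t by auto
  next
    case False
    define R where "R = min (x k) (x k') + 1"
    have hR: "E k' l' R < E k l R"
    proof (cases "k < k'")
      case True
      then have "R = x k + 1" using xlt[of k k'] o ij unfolding R_def by auto
      then show ?thesis using D[of k k' l'] True o ab Fa[of k l] ij by auto
    next
      case False
      then have kk: "k' < k" using o by auto
      then have "R = x k' + 1" using xlt[of k' k] o ij unfolding R_def by auto
      then show ?thesis using Dneg[of k' k l] kk o ab Fa[of k' l'] ij by auto
    qed
    have h0: "E k' l' (x i + 1) < E k l (x i + 1)" using A[of k l "x i + 1"] Aneg[of k' l' "x i + 1"] o ab X by auto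
    show ?thesis
    proof (rule ccontr)
      assume neg: "\<not> E k' l' t < E k l t"
      have Rb: "R < 2" "x i + 1 < R" unfolding R_def using X by auto
      have c: "continuous_on {x i + 1..R} (\<lambda>u. E k l u - E k' l' u)"
        using ij o X unfolding R_def by (intro continuous_on_diff cont_sub) auto
      have c1: "continuous_on {x i + 1..t} (\<lambda>u. E k l u - E k' l' u)"
        by (rule continuous_on_subset[OF c]) (use t R_def in auto)
      obtain t0 where t0: "x i + 1 \<le> t0" "t0 \<le> t" "E k l t0 - E k' l' t0 = 0"
        using ivt_down[OF c1] h0 neg False by force
      have t0b: "x i + 1 < t0" "t0 < R" using t0 h0 hR t R_def by (auto simp: order.order_iff_strict)
      have un: "u = t0" if u: "x i + 1 \<le> u" "u \<le> R" "E k l u - E k' l' u = 0" for u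
      proof -
        have "frac u = frac t0"
          by (rule uniq[of k l k' l' u u t0 t0]) (use ij o X u t0 t0b R_def in auto)
        then show ?thesis using frac_big[of u] frac_big[of t0] u t0b Rb X by auto
      qed
      have pin: "(frac t0, E k l t0) \<in> epts x E k l \<inter> epts x E k' l'"
      proof -
        have "0 < x k" "x k < x l" "x l < 1" using X by auto
        from lift[OF this, of t0 E] have 1: "ey x E k l (frac t0) = E k l t0 \<and> 0 \<le> frac t0 \<and> frac t0 < 1 \<and> frac t0 \<in> edom x k l"
          using t0 t0b R_def t X by auto
        have "0 < x k'" "x k' < x l'" "x l' < 1" using X by auto
        from lift[OF this, of t0 E] have 2: "ey x E k' l' (frac t0) = E k' l' t0 \<and> 0 \<le> frac t0 \<and> frac t0 < 1 \<and> frac t0 \<in> edom x k' l'"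
          using t0 t0b R_def t X by auto
        show ?thesis using 1 2 t0 unfolding epts_def by force
      qed
      have ft0: "frac t0 = t0 - 1" using frac_big[of t0] t0b Rb X by auto
      have "(frac t0, E k l t0) \<in> {(x k, y k), (x l, y l)} \<inter> {(x k', y k'), (x l', y l')} \<or> proper_cross x E k l k' l' (fst (frac t0, E k l t0))"
        by (rule flag_cross[OF fl]) (use ij o pin in auto)
      moreover have "frac t0 \<noteq> x k" "frac t0 \<noteq> x l" using ft0 t0b R_def X by auto
      ultimately have pc: "proper_cross x E k l k' l' (t0 - 1)" using ft0 by auto
      define a where "a = t0 - 1"
      obtain \<delta> where d: "\<delta> > 0" and dd:
        "((\<forall>t\<in>{a - \<delta><..<a}. ey x E k l t < ey x E k' l' t) \<and> (\<forall>t\<in>{a<..<a + \<delta>}. ey x E k' l' t < ey x E k l t)) \<or>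
         ((\<forall>t\<in>{a - \<delta><..<a}. ey x E k' l' t < ey x E k l t) \<and> (\<forall>t\<in>{a<..<a + \<delta>}. ey x E k l t < ey x E k' l' t))"
        using pc unfolding proper_cross_def a_def by blast
      define \<eta> where "\<eta> = min \<delta> (min (t0 - (x i + 1)) (R - t0)) / 2"
      have e: "\<eta> > 0" "\<eta> < \<delta>" "\<eta> < t0 - (x i + 1)" "\<eta> < R - t0" unfolding \<eta>_def using d t0b by auto
      have ev: "ey x E k l \<tau> = E k l (\<tau> + 1) \<and> ey x E k' l' \<tau> = E k' l' (\<tau> + 1)"
        if "x i \<le> \<tau>" "\<tau> + 1 \<le> R" for \<tau>
        using eylo[of \<tau> x l E k] eylo[of \<tau> x l' E k'] that X R_def by auto
      show False
      proof (cases "\<forall>t\<in>{a - \<delta><..<a}. ey x E k l t < ey x E k' l' t")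
        case True
        have "ey x E k l (a - \<eta>) < ey x E k' l' (a - \<eta>)" using True e by auto
        moreover have "ey x E k l (a - \<eta>) = E k l (a - \<eta> + 1) \<and> ey x E k' l' (a - \<eta>) = E k' l' (a - \<eta> + 1)"
          by (rule ev) (use e a_def in auto)
        ultimately have neg1: "E k l (t0 - \<eta>) - E k' l' (t0 - \<eta>) < 0" unfolding a_def by auto
        have c2: "continuous_on {x i + 1..t0 - \<eta>} (\<lambda>u. E k l u - E k' l' u)"
          by (rule continuous_on_subset[OF c]) (use e in auto)
        obtain u where "x i + 1 \<le> u" "u \<le> t0 - \<eta>" "E k l u - E k' l' u = 0"
          using ivt_down[OF c2] h0 neg1 e by force
        then show False using un[of u] e by auto
      next
        case False
        then have True': "\<forall>t\<in>{a<..<a + \<delta>}. ey x E k l t < ey x E k' l' t" using dd by auto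
        have "ey x E k l (a + \<eta>) < ey x E k' l' (a + \<eta>)" using True' e by auto
        moreover have "ey x E k l (a + \<eta>) = E k l (a + \<eta> + 1) \<and> ey x E k' l' (a + \<eta>) = E k' l' (a + \<eta> + 1)"
          by (rule ev) (use e a_def t0b in auto)
        ultimately have neg1: "E k l (t0 + \<eta>) - E k' l' (t0 + \<eta>) < 0" unfolding a_def by auto
        have c2: "continuous_on {t0 + \<eta>..R} (\<lambda>u. E k l u - E k' l' u)"
          by (rule continuous_on_subset[OF c]) (use e t0b in auto)
        obtain u where "t0 + \<eta> \<le> u" "u \<le> R" "E k l u - E k' l' u = 0"
          using ivt_up[OF c2] hR neg1 e by force
        then show False using un[of u] e t0b by auto
      qed
    qed
  qed
qed


lemma cyl:
  assumes fl: "flag n x y E" and ij: "1 \<le> i" "i < j" "j \<le> n"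
   and o: "j < k" "k < l" "l \<le> n" "j < k'" "k' < l'" "l' \<le> n"
   and ab: "E i j (x k) < y k" "E i j (x l) < y l" "y k' < E i j (x k')" "y l' < E i j (x l')"
   and a: "0 \<le> a" "a < 1" "a \<in> edom x k l" "a \<in> edom x k' l'"
  shows "ey x E k' l' a < ey x E k l a"
proof -
  interpret PL n x y E i j using flag_PP[OF fl] ij by unfold_locales
  have X: "0 < x i" "x i < x j" "x j < x k" "x k < x l" "x j < x k'" "x k' < x l'" "x l < 1" "x l' < 1"
    using xb[of i] xb[of l] xb[of l'] xlt[of i j] xlt[of j k] xlt[of k l] xlt[of j k'] xlt[of k' l'] ij o by auto
  have dis: "k \<noteq> k'" "k \<noteq> l'" "l \<noteq> k'" "l \<noteq> l'" using ab by auto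
  have fa: "frac a = a" using frac_small a by auto
  have ea: "x l \<le> a \<or> a \<le> x k" "x l' \<le> a \<or> a \<le> x k'" using a fa unfolding edom_def by auto
  have M: "E k' l' t < E k l t" if "max (x l) (x l') \<le> t" "t \<le> min (x k) (x k') + 1" for t
    by (rule main_arc[OF fl ij o dis(1) ab that])
  show ?thesis
  proof (cases "x l \<le> a")
    case True
    note T1 = True
    show ?thesis
    proof (cases "x l' \<le> a")
      case True
      then show ?thesis using eyhi[of x l a E k] eyhi[of x l' a E k'] T1 a M[of a] X by auto
    next
      case False
      then have ak: "a \<le> x k'" using ea by auto
      have "l < k'"
      proof (rule ccontr)
        assume "\<not> l < k'"
        then have "k' < l" using dis by auto
        then show False using xlt[of k' l] ij o T1 ak by auto
      qed
      then have "E k' l' (a + 1) < E k l a" using E[of k l k' l' a] o ab T1 ak by auto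
      then show ?thesis using eyhi[of x l a E k] eylo[of a x l' E k'] T1 False a X by auto
    qed
  next
    case False
    note F1 = False
    then have ak: "a \<le> x k" using ea by auto
    show ?thesis
    proof (cases "x l' \<le> a")
      case True
      have "l' < k"
      proof (rule ccontr)
        assume "\<not> l' < k"
        then have "k < l'" using dis by auto
        then show False using xlt[of k l'] ij o True ak by auto
      qed
      then have "E k' l' a < E k l (a + 1)" using Eneg[of k' l' k l a] o ab True ak by auto
      then show ?thesis using eylo[of a x l E k] eyhi[of x l' a E k'] F1 True a X by auto
    next
      case False
      then have "a \<le> x k'" using ea by auto
      then show ?thesis using eylo[of a x l E k] eylo[of a x l' E k'] F1 False a X M[of "a + 1"] ak by auto
    qed
  qed
qed

theorem claim14:
  assumes "flag n x y E"
    and "1 \<le> i" and "i < j" and "j \<le> n"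
    and "separating n x y E i j"
  shows "\<forall>k l k' l'. k < l \<and> k \<in> Vplus n x y E i j \<and> l \<in> Vplus n x y E i j \<and>
           k' < l' \<and> k' \<in> Vminus n x y E i j \<and> l' \<in> Vminus n x y E i j \<longrightarrow>
           epts x E k l \<inter> epts x E k' l' = {} \<and>
           related x E k' l' k l \<and> prec x E k' l' k l"
proof (intro allI impI)
  fix k l k' l'
  assume h: "k < l \<and> k \<in> Vplus n x y E i j \<and> l \<in> Vplus n x y E i j \<and>
           k' < l' \<and> k' \<in> Vminus n x y E i j \<and> l' \<in> Vminus n x y E i j"
  interpret PL n x y E i j using flag_PP[OF assms(1)] assms(2-4) by unfold_locales
  have eyv: "ey x E i j (x s) = E i j (x s)" if "j < s" "s \<le> n" for s
    using eyhi[of x j "x s" E i] xb[of s] xlt[of j s] that assms(2-4) by auto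
  have o: "j < k" "k < l" "l \<le> n" "j < k'" "k' < l'" "l' \<le> n"
    using h unfolding Vplus_def Vminus_def by auto
  have ab: "E i j (x k) < y k" "E i j (x l) < y l" "y k' < E i j (x k')" "y l' < E i j (x l')"
    using h eyv[of k] eyv[of l] eyv[of k'] eyv[of l'] o unfolding Vplus_def Vminus_def by auto
  have C: "ey x E k' l' a < ey x E k l a" if "0 \<le> a" "a < 1" "a \<in> edom x k l" "a \<in> edom x k' l'" for a
    by (rule cyl[OF assms(1-4) o ab that])
  have er: "a \<in> erel x c d \<Longrightarrow> a \<in> edom x c d" for a c d unfolding erel_def edom_def by auto
  have "0 < x k'" "0 < x k" using xb[of k'] xb[of k] o assms(2-4) by auto
  then have z: "0 \<in> erel x k' l'" "0 \<in> erel x k l" unfolding erel_def by auto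
  have P1: "epts x E k l \<inter> epts x E k' l' = {}"
  proof (rule ccontr)
    assume "epts x E k l \<inter> epts x E k' l' \<noteq> {}"
    then obtain p where "p \<in> epts x E k l" "p \<in> epts x E k' l'" by blast
    then obtain a a' where "p = (a, ey x E k l a)" "0 \<le> a" "a < 1" "a \<in> edom x k l"
      "p = (a', ey x E k' l' a')" "a' \<in> edom x k' l'" unfolding epts_def by blast
    then show False using C[of a] by auto
  qed
  have P3: "prec x E k' l' k l" unfolding prec_def using C er by (auto intro: less_imp_le)
  have P2: "related x E k' l' k l"
    unfolding related_def
  proof (intro conjI)
    show "\<not> (\<exists>a. proper_cross x E k' l' k l a)"
    proof
      assume "\<exists>a. proper_cross x E k' l' k l a"
      then obtain a \<delta> where "0 \<le> a" "a < 1" "ey x E k' l' a = ey x E k l a" "\<delta> > 0"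
        "{a - \<delta><..<a + \<delta>} \<subseteq> erel x k' l' \<inter> erel x k l" unfolding proper_cross_def by blast
      moreover then have "a \<in> erel x k' l' \<inter> erel x k l" by auto
      ultimately show False using C[of a] er by fastforce
    qed
    show "\<exists>a. 0 \<le> a \<and> a < 1 \<and> a \<in> erel x k' l' \<inter> erel x k l" using z by (intro exI[of _ 0]) auto
    show "(\<forall>a. 0 \<le> a \<and> a < 1 \<and> a \<in> erel x k' l' \<inter> erel x k l \<longrightarrow> ey x E k' l' a \<le> ey x E k l a) \<or>
      (\<forall>a. 0 \<le> a \<and> a < 1 \<and> a \<in> erel x k' l' \<inter> erel x k l \<longrightarrow> ey x E k l a \<le> ey x E k' l' a)"
      using P3 unfolding prec_def by blast
  qed
  show "epts x E k l \<inter> epts x E k' l' = {} \<and> related x E k' l' k l \<and> prec x E k' l' k l"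
    using P1 P2 P3 by blast
qed

end
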